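(* Let $V$ be a $(2n+1)$-dimensional complex vector space, $U\subset V$ a hyperplane, $V_\bullet$ a full flag in $V$, and $\omega$ a skew-symmetric bilinear form on $V$ whose restriction to $U$ is nondegenerate. Then there is a basis $\{e_1,\dots,e_{2n+1}\}$ of $V$ such that $e_1,\dots,e_{2n}\in U$, $e_{2n+1}$ spans $\ker(\omega)=\{v:\omega(v,\cdot)\equiv0\}$, the basis $\{e_1,\dots,e_{2n+1}\}$ is hyperbolic with respect to $\omega$, and each subspace $V_i$ of the flag is spanned by some vectors chosen among $e_1,\dots,e_{2n+1}$ and $e_1+e_{2n+1},\dots,e_{2n}+e_{2n+1}$ (i.e. there are vectors $v_1,\dots,v_{2n+1}$, each of the form $e_k$ or $e_k+e_{2n+1}$ with $k\le 2n$, or $e_{2n+1}$, with $V_i=\langle v_1,\dots,v_i\rangle$ for all $i$).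
   Context: A full flag $V_\bullet$ in $V$ is a chain of subspaces $0\subset V_1\subset\dots\subset V_{2n+1}=V$ with $\dim V_i=i$. A basis $\{e_1,\dots,e_N\}$ is hyperbolic with respect to a skew-symmetric form $\omega$ if for every $i$ either $\omega(e_i,\cdot)\equiv 0$, or there is exactly one index $j$ with $\omega(e_i,e_j)\neq 0$, and for that $j$ one has $\omega(e_i,e_j)=\pm1$. *)

theory Defs
  imports "HOL-Analysis.Analysis"
begin

text \<open>Vectors of V = complex^'m; complex scalar multiplication is (*s), and
  complex-linear notions are those of the interpretation vec (vec.span, vec.dim, ...).\<close>

definition skew_bilinear :: "(complex^'m \<Rightarrow> complex^'m \<Rightarrow> complex) \<Rightarrow> bool" where
  "skew_bilinear \<omega> \<longleftrightarrow>
     (\<forall>x y z. \<omega> (x + y) z = \<omega> x z + \<omega> y z) \<and>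
     (\<forall>c x z. \<omega> (c *s x) z = c * \<omega> x z) \<and>
     (\<forall>x y z. \<omega> z (x + y) = \<omega> z x + \<omega> z y) \<and>
     (\<forall>c x z. \<omega> z (c *s x) = c * \<omega> z x) \<and>
     (\<forall>x y. \<omega> x y = - \<omega> y x)"

definition full_flag :: "nat \<Rightarrow> (nat \<Rightarrow> (complex^'m) set) \<Rightarrow> bool" where
  "full_flag N F \<longleftrightarrow>
     (\<forall>i\<in>{1..N}. vec.subspace (F i) \<and> vec.dim (F i) = i) \<and>
     (\<forall>i. 1 \<le> i \<and> i < N \<longrightarrow> F i \<subseteq> F (Suc i)) \<and>
     F N = UNIV"

definition is_basis :: "nat \<Rightarrow> (nat \<Rightarrow> complex^'m) \<Rightarrow> bool" where
  "is_basis N e \<longleftrightarrow> inj_on e {1..N} \<and> vec.independent (e ` {1..N}) \<and>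
     vec.span (e ` {1..N}) = UNIV"

definition hyperbolic :: "(complex^'m \<Rightarrow> complex^'m \<Rightarrow> complex) \<Rightarrow> nat \<Rightarrow> (nat \<Rightarrow> complex^'m) \<Rightarrow> bool" where
  "hyperbolic \<omega> N e \<longleftrightarrow>
     (\<forall>i\<in>{1..N}. (\<forall>v. \<omega> (e i) v = 0) \<or>
        ((\<exists>!j. j \<in> {1..N} \<and> \<omega> (e i) (e j) \<noteq> 0) \<and>
         (\<forall>j\<in>{1..N}. \<omega> (e i) (e j) \<noteq> 0 \<longrightarrow> \<omega> (e i) (e j) = 1 \<or> \<omega> (e i) (e j) = -1)))"

end

theory Submission
  imports Defs
begin


context fixes \<omega> :: "complex^'m \<Rightarrow> complex^'m \<Rightarrow> complex"
  assumes sk: "skew_bilinear \<omega>"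
begin

lemma om_addl[simp]: "\<omega> (x + y) z = \<omega> x z + \<omega> y z" using sk unfolding skew_bilinear_def by blast
lemma om_addr[simp]: "\<omega> z (x + y) = \<omega> z x + \<omega> z y" using sk unfolding skew_bilinear_def by blast
lemma om_scl[simp]: "\<omega> (c *s x) z = c * \<omega> x z" using sk unfolding skew_bilinear_def by blast
lemma om_scr[simp]: "\<omega> z (c *s x) = c * \<omega> z x" using sk unfolding skew_bilinear_def by blast
lemma om_skew: "\<omega> x y = - \<omega> y x" using sk unfolding skew_bilinear_def by blast
lemma om_0l[simp]: "\<omega> 0 z = 0" using om_scl[of 0 0 z] by simp
lemma om_0r[simp]: "\<omega> z 0 = 0" using om_scr[of z 0 0] by simp
lemma om_negl[simp]: "\<omega> (- x) z = - \<omega> x z"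
  using om_scl[of "-1" x z] by (simp add: vector_sneg_minus1[symmetric])
lemma om_negr[simp]: "\<omega> z (- x) = - \<omega> z x"
  using om_scr[of z "-1" x] by (simp add: vector_sneg_minus1[symmetric])
lemma om_diffl[simp]: "\<omega> (x - y) z = \<omega> x z - \<omega> y z"
  using om_addl[of x "-y" z] by simp
lemma om_diffr[simp]: "\<omega> z (x - y) = \<omega> z x - \<omega> z y"
  using om_addr[of z x "-y"] by simp
lemma om_self[simp]: "\<omega> x x = 0" using om_skew[of x x] by simp

lemma om_span_l: assumes "\<forall>x\<in>A. \<omega> x f = 0" "y \<in> vec.span A" shows "\<omega> y f = 0"
proof -
  have "vec.span A \<subseteq> {y. \<omega> y f = 0}"
    apply (rule vec.span_minimal) using assms(1) by (auto simp: vec.subspace_def)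
  thus ?thesis using assms(2) by auto
qed

lemma om_span_r: assumes "\<forall>x\<in>A. \<omega> f x = 0" "y \<in> vec.span A" shows "\<omega> f y = 0"
  using om_span_l[of A f y] assms om_skew by (metis neg_equal_0_iff_equal)

end

definition hyp_set :: "(complex^'m \<Rightarrow> complex^'m \<Rightarrow> complex) \<Rightarrow> (complex^'m) set \<Rightarrow> bool" where
  "hyp_set \<omega> E \<longleftrightarrow> (\<forall>x\<in>E. (\<exists>!y. y \<in> E \<and> \<omega> x y \<noteq> 0) \<and> (\<forall>y\<in>E. \<omega> x y \<noteq> 0 \<longrightarrow> \<omega> x y = 1 \<or> \<omega> x y = -1))"

definition nondeg :: "(complex^'m \<Rightarrow> complex^'m \<Rightarrow> complex) \<Rightarrow> (complex^'m) set \<Rightarrow> bool" where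
  "nondeg \<omega> U \<longleftrightarrow> (\<forall>u\<in>U. (\<forall>w\<in>U. \<omega> u w = 0) \<longrightarrow> u = 0)"

definition fresh :: "(complex^'m) list \<Rightarrow> bool" where
  "fresh ws \<longleftrightarrow> (\<forall>k<length ws. ws!k \<notin> vec.span (set (take k ws)))"

lemma span_insert_cong: "vec.span A = vec.span B \<Longrightarrow> vec.span (insert a A) = vec.span (insert a B)"
  by (simp add: vec.span_insert)

lemma span_insert_scale: "(t::complex) \<noteq> 0 \<Longrightarrow> vec.span (insert (t *s z) X) = vec.span (insert z X)"
proof (rule vec.span_eq[THEN iffD2], intro conjI)
  assume t: "t \<noteq> 0"
  show "insert (t *s z) X \<subseteq> vec.span (insert z X)"
    by (auto intro: vec.span_base vec.span_scale)
  have "z = (1/t) *s (t *s z)" using t by (simp add: vector_smult_assoc)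
  then have "z \<in> vec.span (insert (t *s z) X)"
    by (metis insertI1 vec.span_base vec.span_scale)
  then show "insert z X \<subseteq> vec.span (insert (t *s z) X)"
    by (auto intro: vec.span_base)
qed

lemma span_G0:
  assumes "\<forall>x\<in>A. \<rho> x - x \<in> vec.span C"
  shows "vec.span (C \<union> \<rho> ` A) = vec.span (C \<union> A)"
proof (rule vec.span_eq[THEN iffD2], intro conjI)
  have sub: "vec.span C \<subseteq> vec.span (C \<union> A)" "vec.span C \<subseteq> vec.span (C \<union> \<rho> ` A)"
    by (simp_all add: vec.span_mono)
  show "C \<union> \<rho> ` A \<subseteq> vec.span (C \<union> A)"
  proof
    fix y assume "y \<in> C \<union> \<rho> ` A"
    then show "y \<in> vec.span (C \<union> A)"
    proof
      assume "y \<in> C" then show ?thesis by (auto intro: vec.span_base)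
    next
      assume "y \<in> \<rho> ` A"
      then obtain x where x: "x \<in> A" "y = \<rho> x" by auto
      have "y = (\<rho> x - x) + x" using x by simp
      moreover have "\<rho> x - x \<in> vec.span (C \<union> A)" using assms x sub by auto
      moreover have "x \<in> vec.span (C \<union> A)" using x by (auto intro: vec.span_base)
      ultimately show ?thesis by (metis vec.span_add)
    qed
  qed
  show "C \<union> A \<subseteq> vec.span (C \<union> \<rho> ` A)"
  proof
    fix y assume "y \<in> C \<union> A"
    then show "y \<in> vec.span (C \<union> \<rho> ` A)"
    proof
      assume "y \<in> C" then show ?thesis by (auto intro: vec.span_base)
    next
      assume x: "y \<in> A"
      have "y = \<rho> y - (\<rho> y - y)" by simp
      moreover have "\<rho> y - y \<in> vec.span (C \<union> \<rho> ` A)" using assms x sub by auto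
      moreover have "\<rho> y \<in> vec.span (C \<union> \<rho> ` A)" using x by (auto intro: vec.span_base)
      ultimately show ?thesis by (metis vec.span_diff)
    qed
  qed
qed

lemma span_S3:
  assumes "(l::complex) \<noteq> 0" "(m::complex) \<noteq> 0"
  shows "vec.span (insert (l *s f) (insert (m *s g + n *s f) B)) = vec.span (insert f (insert g B))"
proof (rule vec.span_eq[THEN iffD2], intro conjI)
  have fg: "f \<in> vec.span (insert f (insert g B))" "g \<in> vec.span (insert f (insert g B))"
    by (auto intro: vec.span_base)
  have "l *s f \<in> vec.span (insert f (insert g B))" "m *s g + n *s f \<in> vec.span (insert f (insert g B))"
    using fg by (simp_all add: vec.span_scale vec.span_add)
  moreover have "B \<subseteq> vec.span (insert f (insert g B))" by (rule order_trans[OF _ vec.span_superset]) blast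
  ultimately show "insert (l *s f) (insert (m *s g + n *s f) B) \<subseteq> vec.span (insert f (insert g B))"
    by simp
  let ?S = "vec.span (insert (l *s f) (insert (m *s g + n *s f) B))"
  have f: "f = (1/l) *s (l *s f)" using assms by (simp add: vector_smult_assoc)
  have "l *s f \<in> ?S" by (simp add: vec.span_base)
  then have "(1/l) *s (l *s f) \<in> ?S" by (rule vec.span_scale)
  then have fS: "f \<in> ?S" unfolding f[symmetric] .
  have g: "g = (1/m) *s ((m *s g + n *s f) - n *s f)" using assms
    by (simp add: vector_smult_assoc)
  have "m *s g + n *s f \<in> ?S" by (simp add: vec.span_base)
  moreover have "n *s f \<in> ?S" using fS by (rule vec.span_scale)
  ultimately have "(m *s g + n *s f) - n *s f \<in> ?S" by (rule vec.span_diff)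
  then have "(1/m) *s ((m *s g + n *s f) - n *s f) \<in> ?S" by (rule vec.span_scale)
  then have gS: "g \<in> ?S" unfolding g[symmetric] .
  have "B \<subseteq> ?S" by (rule order_trans[OF _ vec.span_superset]) blast
  then show "insert f (insert g B) \<subseteq> ?S" using fS gS by simp
qed

lemma fresh_F1: "fresh ws \<Longrightarrow> k < length ws \<Longrightarrow>
   vec.span (set (take (Suc k) ws)) \<noteq> vec.span (set (take k ws))"
  unfolding fresh_def
  by (metis take_Suc_conv_app_nth set_append Un_insert_right sup_bot.right_neutral list.set(1) list.set(2)
      vec.span_base insertI1)

lemma freshI: "(\<And>k. k < length ws \<Longrightarrow> vec.span (set (take (Suc k) ws)) \<noteq> vec.span (set (take k ws))) \<Longrightarrow> fresh ws"
  unfolding fresh_def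
  by (metis take_Suc_conv_app_nth set_append Un_insert_right sup_bot.right_neutral list.set(1) list.set(2)
      vec.span_redundant)


lemma ex1_helper: "y0 \<in> A \<Longrightarrow> P y0 \<Longrightarrow> (\<forall>y\<in>A. P y \<longrightarrow> y = y0) \<Longrightarrow> \<exists>!y. y \<in> A \<and> P y"
  by blast

lemma hyp_extend:
  assumes sk: "skew_bilinear \<omega>" and h: "hyp_set \<omega> E" and e12: "\<omega> e1 e2 = 1"
    and orth: "\<forall>x\<in>E. \<omega> e1 x = 0 \<and> \<omega> e2 x = 0"
  shows "hyp_set \<omega> (insert e1 (insert e2 E))"
proof -
  have e21: "\<omega> e2 e1 = -1" using om_skew[OF sk, of e2 e1] e12 by simp
  have s1: "\<omega> e1 e1 = 0" "\<omega> e2 e2 = 0" using om_self[OF sk] by auto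
  have o2: "\<forall>x\<in>E. \<omega> x e1 = 0 \<and> \<omega> x e2 = 0" using orth om_skew[OF sk] by (metis neg_equal_0_iff_equal)
  have n12: "e1 \<noteq> e2" using s1 e12 by auto
  have n1: "e1 \<notin> E" using orth e21 by auto
  have n2: "e2 \<notin> E" using orth e12 by auto
  show ?thesis unfolding hyp_set_def
  proof (rule ballI, rule conjI)
    fix x assume x: "x \<in> insert e1 (insert e2 E)"
    show "\<exists>!y. y \<in> insert e1 (insert e2 E) \<and> \<omega> x y \<noteq> 0"
    proof (cases "x = e1")
      case True
      have "\<forall>y\<in>insert e1 (insert e2 E). \<omega> x y \<noteq> 0 \<longrightarrow> y = e2" using True orth s1 by blast
      then show ?thesis using True e12 ex1_helper[of e2 "insert e1 (insert e2 E)" "\<lambda>y. \<omega> x y \<noteq> 0"] by simp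
    next
      case F1: False
      show ?thesis
      proof (cases "x = e2")
        case True
        have "\<forall>y\<in>insert e1 (insert e2 E). \<omega> x y \<noteq> 0 \<longrightarrow> y = e1" using True orth s1 by blast
        then show ?thesis using True e21 ex1_helper[of e1 "insert e1 (insert e2 E)" "\<lambda>y. \<omega> x y \<noteq> 0"] by simp
      next
        case False
        then have xE: "x \<in> E" using x F1 by auto
        then obtain y where y: "y \<in> E" "\<omega> x y \<noteq> 0" "\<And>y'. y' \<in> E \<and> \<omega> x y' \<noteq> 0 \<Longrightarrow> y' = y"
          using h unfolding hyp_set_def by metis
        have "\<forall>y'\<in>insert e1 (insert e2 E). \<omega> x y' \<noteq> 0 \<longrightarrow> y' = y" using y(3) o2 xE by blast
        then show ?thesis by (rule ex1_helper[of y, rotated 2]) (use y(1,2) in auto)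
      qed
    qed
    show "\<forall>y\<in>insert e1 (insert e2 E). \<omega> x y \<noteq> 0 \<longrightarrow> \<omega> x y = 1 \<or> \<omega> x y = - 1"
    proof (intro ballI impI)
      fix y assume y: "y \<in> insert e1 (insert e2 E)" and nz: "\<omega> x y \<noteq> 0"
      consider "x = e1" | "x = e2" | "x \<in> E" using x by blast
      then show "\<omega> x y = 1 \<or> \<omega> x y = - 1"
      proof cases
        case 1
        then have "y = e2" using y nz s1 orth by blast
        then show ?thesis using 1 e12 by simp
      next
        case 2
        then have "y = e1" using y nz s1 orth by blast
        then show ?thesis using 2 e21 by simp
      next
        case 3
        then have "y \<in> E" using y nz o2 by blast
        then show ?thesis using 3 nz h unfolding hyp_set_def by blast
      qed
    qed
  qed
qed


lemma pair_choice:
  assumes sk: "skew_bilinear \<omega>" and U: "vec.subspace U" and uf: "uf \<in> U" and ug: "ug \<in> U"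
    and f: "f = uf + cf *s z" and g: "g = ug + cg *s z" and fg: "\<omega> f g = 1"
    and z: "\<forall>y. \<omega> z y = 0" and k: "\<kappa> \<noteq> 0"
  shows "\<exists>e1 e2 v1 vj l m n. e1 \<in> U \<and> e2 \<in> U \<and> \<omega> e1 e2 = 1 \<and> v1 = l *s f \<and> vj = m *s g + n *s f
     \<and> l \<noteq> 0 \<and> m \<noteq> 0 \<and> (v1 = e1 \<or> v1 = e1 + \<kappa> *s z) \<and> (vj = e2 \<or> vj = e2 + \<kappa> *s z)"
proof -
  have zr: "\<omega> y z = 0" for y using z om_skew[OF sk, of y z] by simp
  have uu: "\<omega> uf ug = 1" using fg z zr unfolding f g by (simp add: om_addl[OF sk] om_addr[OF sk] om_scl[OF sk] om_scr[OF sk])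
  have ss: "\<omega> uf uf = 0" by (rule om_self[OF sk])
  consider "cf \<noteq> 0" | "cf = 0" "cg \<noteq> 0" | "cf = 0" "cg = 0" by blast
  then show ?thesis
  proof cases
    case 1
    let ?e1 = "(\<kappa>/cf) *s uf" and ?e2 = "(cf/\<kappa>) *s (ug - (cg/cf) *s uf)"
    have "?e1 \<in> U" "?e2 \<in> U" using U uf ug by (meson vec.subspace_scale vec.subspace_diff)+
    moreover have "\<omega> ?e1 ?e2 = 1" using uu ss 1 k
      by (simp add: om_scl[OF sk] om_scr[OF sk] om_diffr[OF sk])
    moreover have "(\<kappa>/cf) *s f = ?e1 + \<kappa> *s z" using 1 unfolding f by (simp add: vec_eq_iff field_simps)
    moreover have "(cf/\<kappa>) *s g + (- cg/\<kappa>) *s f = ?e2" using 1 k unfolding f g by (simp add: vec_eq_iff field_simps)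
    ultimately show ?thesis using 1 k
      by (intro exI[of _ ?e1] exI[of _ ?e2] exI[of _ "(\<kappa>/cf) *s f"] exI[of _ "(cf/\<kappa>) *s g + (- cg/\<kappa>) *s f"]
         exI[of _ "\<kappa>/cf"] exI[of _ "cf/\<kappa>"] exI[of _ "- cg/\<kappa>"]) simp
  next
    case 2
    let ?e1 = "(cg/\<kappa>) *s uf" and ?e2 = "(\<kappa>/cg) *s ug"
    have "?e1 \<in> U" "?e2 \<in> U" using U uf ug by (auto intro!: vec.subspace_scale)
    moreover have "\<omega> ?e1 ?e2 = 1" using uu 2 k
      by (simp add: om_scl[OF sk] om_scr[OF sk])
    moreover have "(cg/\<kappa>) *s f = ?e1" using 2 unfolding f by (simp add: vec_eq_iff field_simps)
    moreover have "(\<kappa>/cg) *s g + 0 *s f = ?e2 + \<kappa> *s z" using 2 k unfolding f g by (simp add: vec_eq_iff field_simps)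
    ultimately show ?thesis using 2 k
      by (intro exI[of _ ?e1] exI[of _ ?e2] exI[of _ "(cg/\<kappa>) *s f"] exI[of _ "(\<kappa>/cg) *s g + 0 *s f"]
         exI[of _ "cg/\<kappa>"] exI[of _ "\<kappa>/cg"] exI[of _ "0"]) simp
  next
    case 3
    have "f = uf" "g = ug" using 3 f g by simp_all
    then show ?thesis using uf ug uu
      by (intro exI[of _ uf] exI[of _ ug] exI[of _ f] exI[of _ "1 *s g + 0 *s f"]
         exI[of _ "1"] exI[of _ "1"] exI[of _ "0"]) simp
  qed
qed




definition hyps :: "(complex^'m \<Rightarrow> complex^'m \<Rightarrow> complex) \<Rightarrow> (complex^'m) set \<Rightarrow> complex^'m \<Rightarrow> (complex^'m) list \<Rightarrow> bool" where
  "hyps \<omega> U z ws \<longleftrightarrow> vec.subspace U \<and> nondeg \<omega> U \<and> (\<forall>y. \<omega> z y = 0) \<and> set ws \<subseteq> vec.span (insert z U)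
     \<and> U \<subseteq> vec.span (set ws) \<and> fresh ws"

definition concl :: "(complex^'m \<Rightarrow> complex^'m \<Rightarrow> complex) \<Rightarrow> (complex^'m) set \<Rightarrow> complex^'m \<Rightarrow> (complex^'m) list \<Rightarrow> bool" where
  "concl \<omega> U z ws \<longleftrightarrow> (\<exists>E vs \<kappa>. \<kappa> \<noteq> 0 \<and> E \<subseteq> U \<and> finite E \<and> hyp_set \<omega> E \<and> length vs = length ws
     \<and> (\<forall>v\<in>set vs. v = \<kappa> *s z \<or> (\<exists>x\<in>E. v = x \<or> v = x + \<kappa> *s z))
     \<and> (\<forall>i\<le>length ws. vec.span (set (take i vs)) = vec.span (set (take i ws))))"

lemma set_take_Suc: "k < length xs \<Longrightarrow> set (take (Suc k) xs) = insert (xs!k) (set (take k xs))"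
  by (simp add: take_Suc_conv_app_nth)

lemma NZ: assumes "length vs = length ws" "\<forall>i\<le>length ws. vec.span (set (take i vs)) = vec.span (set (take i ws))"
  "fresh ws" shows "0 \<notin> set vs"
proof
  assume "0 \<in> set vs"
  then obtain k where k: "k < length vs" "vs!k = 0" by (auto simp: in_set_conv_nth)
  have "vec.span (set (take (Suc k) vs)) = vec.span (set (take k vs))"
    using k by (simp add: set_take_Suc)
  then have "vec.span (set (take (Suc k) ws)) = vec.span (set (take k ws))"
    using assms(1,2) k by (metis Suc_leI less_imp_le)
  then show False using fresh_F1[OF assms(3)] k assms(1) by auto
qed

lemma hyp_empty: "hyp_set \<omega> {}" unfolding hyp_set_def by simp

lemma concl_Nil: "hyps \<omega> U z [] \<Longrightarrow> concl \<omega> U z []"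
  unfolding concl_def
  by (intro exI[of _ "{}"] exI[of _ "[]"] exI[of _ "1"]) (auto simp: hyp_empty)

lemma caseA:
  assumes sk: "skew_bilinear \<omega>" and H: "hyps \<omega> U z (w1 # rest)" and A: "w1 \<in> vec.span {z}"
    and IH: "\<forall>ys. length ys < length (w1 # rest) \<longrightarrow> (\<forall>U z. hyps \<omega> U z ys \<longrightarrow> concl \<omega> U z ys)"
  shows "concl \<omega> U z (w1 # rest)"
proof -
  let ?ws = "w1 # rest"
  have U: "vec.subspace U" and nd: "nondeg \<omega> U" and zk: "\<forall>y. \<omega> z y = 0"
    and sws: "set ?ws \<subseteq> vec.span (insert z U)" and Uws: "U \<subseteq> vec.span (set ?ws)" and fr: "fresh ?ws"
    using H unfolding hyps_def by auto
  have spanU: "vec.span U = U" using U by simp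
  have "w1 \<noteq> 0" using fr unfolding fresh_def by (auto dest: spec[of _ 0])
  obtain t where t: "w1 = t *s z" using A by (auto simp: vec.span_singleton)
  have t0: "t \<noteq> 0" using \<open>w1 \<noteq> 0\<close> t by auto
  define \<pi> where "\<pi> y = y - (SOME c. y - c *s z \<in> U) *s z" for y
  have \<pi>U: "\<pi> y \<in> U" if "y \<in> vec.span (insert z U)" for y
  proof -
    have "\<exists>c. y - c *s z \<in> U" using that spanU by (simp add: vec.span_breakdown_eq)
    from someI_ex[OF this] show ?thesis unfolding \<pi>_def .
  qed
  have \<pi>d: "\<pi> y - y \<in> vec.span {z}" for y
  proof -
    have "\<pi> y - y = (- (SOME c. y - c *s z \<in> U)) *s z" unfolding \<pi>_def by (simp add: vec_eq_iff)
    then show ?thesis unfolding vec.span_singleton by (metis rangeI)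
  qed
  define ws' where "ws' = map \<pi> rest"
  have lws': "length ws' = length rest" unfolding ws'_def by simp
  have KA: "vec.span (insert z (set (take k ws'))) = vec.span (set (take (Suc k) ?ws))" for k
  proof -
    have "set (take (Suc k) ?ws) = insert (t *s z) (set (take k rest))" using t by simp
    then have "vec.span (set (take (Suc k) ?ws)) = vec.span (insert z (set (take k rest)))"
      using span_insert_scale[OF t0] by simp
    also have "\<dots> = vec.span ({z} \<union> set (take k rest))" by simp
    also have "\<dots> = vec.span ({z} \<union> \<pi> ` set (take k rest))"
      by (rule span_G0[symmetric]) (use \<pi>d in auto)
    also have "\<dots> = vec.span (insert z (set (take k ws')))" unfolding ws'_def by (simp add: take_map)
    finally show ?thesis by simp
  qed
  have sws': "set ws' \<subseteq> U" using sws \<pi>U unfolding ws'_def by auto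
  have spU: "vec.span (set ws') \<subseteq> U" using sws' U by (simp add: vec.span_minimal)
  have Uws': "U \<subseteq> vec.span (set ws')"
  proof
    fix u assume u: "u \<in> U"
    have "vec.span (set ?ws) = vec.span (insert z (set ws'))"
      using KA[of "length rest"] lws' by simp
    then have "u \<in> vec.span (insert z (set ws'))" using Uws u by auto
    then obtain a where a: "u - a *s z \<in> vec.span (set ws')" by (auto simp: vec.span_breakdown_eq)
    have "a *s z = u - (u - a *s z)" by simp
    also have "\<dots> \<in> U" using a spU u U by (meson subsetD vec.subspace_diff)
    finally have azU: "a *s z \<in> U" .
    have "\<forall>w\<in>U. \<omega> (a *s z) w = 0" using zk om_scl[OF sk] by simp
    then have "a *s z = 0" using nd azU unfolding nondeg_def by blast
    then show "u \<in> vec.span (set ws')" using a by (metis diff_zero)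
  qed
  have fr': "fresh ws'"
  proof (rule freshI)
    fix k assume k: "k < length ws'"
    show "vec.span (set (take (Suc k) ws')) \<noteq> vec.span (set (take k ws'))"
    proof
      assume "vec.span (set (take (Suc k) ws')) = vec.span (set (take k ws'))"
      then have "vec.span (insert z (set (take (Suc k) ws'))) = vec.span (insert z (set (take k ws')))"
        by (rule span_insert_cong)
      then have "vec.span (set (take (Suc (Suc k)) ?ws)) = vec.span (set (take (Suc k) ?ws))"
        using KA by simp
      then show False using fresh_F1[OF fr, of "Suc k"] k lws' by simp
    qed
  qed
  have "U \<subseteq> vec.span (insert 0 U)" by (rule order_trans[OF subset_insertI vec.span_superset])
  then have "set ws' \<subseteq> vec.span (insert 0 U)" using sws' by (rule order_trans[rotated])
  then have "hyps \<omega> U 0 ws'"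
    unfolding hyps_def using U nd Uws' fr' om_0l[OF sk] by auto
  moreover have "length ws' < length ?ws" using lws' by simp
  ultimately have "concl \<omega> U 0 ws'" using IH by blast
  then obtain E vs' \<kappa>' where E: "E \<subseteq> U" "finite E" "hyp_set \<omega> E" and lvs': "length vs' = length ws'"
    and forms: "\<forall>v\<in>set vs'. v = \<kappa>' *s 0 \<or> (\<exists>x\<in>E. v = x \<or> v = x + \<kappa>' *s 0)"
    and spans: "\<forall>i\<le>length ws'. vec.span (set (take i vs')) = vec.span (set (take i ws'))"
    unfolding concl_def by blast
  have nz: "0 \<notin> set vs'" using NZ[OF lvs' spans fr'] .
  define vs where "vs = (t *s z) # vs'"
  show ?thesis unfolding concl_def
  proof (intro exI[of _ E] exI[of _ vs] exI[of _ t] conjI)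
    show "t \<noteq> 0" "E \<subseteq> U" "finite E" "hyp_set \<omega> E" using t0 E by auto
    show "length vs = length ?ws" using lvs' lws' vs_def by simp
    show "\<forall>v\<in>set vs. v = t *s z \<or> (\<exists>x\<in>E. v = x \<or> v = x + t *s z)"
    proof
      fix v assume v: "v \<in> set vs"
      show "v = t *s z \<or> (\<exists>x\<in>E. v = x \<or> v = x + t *s z)"
      proof (cases "v = t *s z")
        case False
        then have v': "v \<in> set vs'" using v unfolding vs_def by simp
        then have "v \<noteq> 0" using nz by metis
        then have "\<exists>x\<in>E. v = x" using forms v' by (metis add.right_neutral vector_smult_rzero)
        then show ?thesis by blast
      qed simp
    qed
    show "\<forall>i\<le>length ?ws. vec.span (set (take i vs)) = vec.span (set (take i ?ws))"
    proof (intro allI impI)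
      fix i assume i: "i \<le> length ?ws"
      show "vec.span (set (take i vs)) = vec.span (set (take i ?ws))"
      proof (cases i)
        case 0 then show ?thesis by simp
      next
        case (Suc k)
        then have k: "k \<le> length ws'" using i lws' by simp
        have "vec.span (set (take i vs)) = vec.span (insert (t *s z) (set (take k vs')))"
          using Suc vs_def by simp
        also have "\<dots> = vec.span (insert (t *s z) (set (take k ws')))"
          by (rule span_insert_cong) (use spans k in blast)
        also have "\<dots> = vec.span (insert z (set (take k ws')))" by (rule span_insert_scale[OF t0])
        also have "\<dots> = vec.span (set (take i ?ws))" using KA Suc by simp
        finally show ?thesis .
      qed
    qed
  qed
qed

lemma caseB:
  assumes sk: "skew_bilinear \<omega>" and H: "hyps \<omega> U z (w1 # rest)" and B: "w1 \<notin> vec.span {z}"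
    and IH: "\<forall>ys. length ys < length (w1 # rest) \<longrightarrow> (\<forall>U z. hyps \<omega> U z ys \<longrightarrow> concl \<omega> U z ys)"
  shows "concl \<omega> U z (w1 # rest)"
proof -
  let ?ws = "w1 # rest"
  note om = om_addl[OF sk] om_addr[OF sk] om_scl[OF sk] om_scr[OF sk] om_diffl[OF sk] om_diffr[OF sk]
    om_self[OF sk] om_0l[OF sk] om_0r[OF sk] om_negl[OF sk] om_negr[OF sk]
  have U: "vec.subspace U" and nd: "nondeg \<omega> U" and zk: "\<forall>y. \<omega> z y = 0"
    and sws: "set ?ws \<subseteq> vec.span (insert z U)" and Uws: "U \<subseteq> vec.span (set ?ws)" and fr: "fresh ?ws"
    using H unfolding hyps_def by auto
  have spanU: "vec.span U = U" using U by simp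
  have zr: "\<omega> y z = 0" for y using zk om_skew[OF sk, of y z] by simp
  have "w1 \<in> vec.span (insert z U)" using sws by auto
  then obtain cf where ufU: "w1 - cf *s z \<in> U" using spanU by (auto simp: vec.span_breakdown_eq)
  define uf where "uf = w1 - cf *s z"
  have ufU': "uf \<in> U" using ufU uf_def by simp
  have f_eq: "w1 = uf + cf *s z" unfolding uf_def by simp
  have "uf \<noteq> 0"
  proof
    assume "uf = 0"
    then have "w1 = cf *s z" using f_eq by simp
    then show False using B by (auto simp: vec.span_singleton)
  qed
  then obtain y where y: "y \<in> U" "\<omega> uf y \<noteq> 0" using nd ufU' unfolding nondeg_def by blast
  have "\<omega> w1 y = \<omega> uf y" unfolding f_eq using zk by (simp add: om)
  then have w1y: "\<omega> w1 y \<noteq> 0" using y by simp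
  have "\<exists>w\<in>set ?ws. \<omega> w1 w \<noteq> 0"
  proof (rule ccontr)
    assume "\<not> ?thesis"
    then have "\<omega> w1 y = 0" using om_span_r[OF sk, of "set ?ws" w1 y] Uws y by auto
    then show False using w1y by simp
  qed
  then have "\<exists>w\<in>set rest. \<omega> w1 w \<noteq> 0" using om by auto
  then obtain xs wj ys where rest: "rest = xs @ wj # ys" and a0: "\<omega> w1 wj \<noteq> 0"
    and xs0: "\<forall>x\<in>set xs. \<not> \<omega> w1 x \<noteq> 0"
    using split_list_first_prop[of rest "\<lambda>w. \<omega> w1 w \<noteq> 0"] by blast
  define a where "a = \<omega> w1 wj"
  define f where "f = w1"
  define g where "g = (1/a) *s wj"
  have fg: "\<omega> f g = 1" using a0 unfolding f_def g_def a_def by (simp add: om)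
  have gf: "\<omega> g f = -1" using fg om_skew[OF sk, of g f] by simp
  have ff: "\<omega> f f = 0" and gg: "\<omega> g g = 0" by (simp_all add: om)
  have "wj \<in> vec.span (insert z U)" using sws rest by auto
  then obtain cg0 where "wj - cg0 *s z \<in> U" using spanU by (auto simp: vec.span_breakdown_eq)
  define ug where "ug = (1/a) *s (wj - cg0 *s z)"
  define cg where "cg = cg0 / a"
  have ugU: "ug \<in> U" unfolding ug_def using \<open>wj - cg0 *s z \<in> U\<close> by (rule vec.subspace_scale[OF U])
  have g_eq: "g = ug + cg *s z" unfolding g_def ug_def cg_def by (simp add: vec_eq_iff field_simps)
  have f_eq': "f = uf + cf *s z" using f_eq f_def by simp
  define \<rho> where "\<rho> y = y - \<omega> y g *s f + \<omega> y f *s g" for y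
  have \<rho>f: "\<omega> (\<rho> y) f = 0" and \<rho>g: "\<omega> (\<rho> y) g = 0" for y
    unfolding \<rho>_def by (simp_all add: om fg gf ff gg)
  have \<rho>d: "\<rho> y - y \<in> vec.span {f, g}" for y
  proof -
    have "\<rho> y - y = (- \<omega> y g) *s f + \<omega> y f *s g" unfolding \<rho>_def by (simp add: vec_eq_iff)
    moreover have "f \<in> vec.span {f, g}" "g \<in> vec.span {f, g}" by (auto intro: vec.span_base)
    ultimately show ?thesis by (simp add: vec.span_diff vec.span_scale)
  qed
  have xsf: "\<omega> x f = 0" if "x \<in> set xs" for x
    using xs0 that om_skew[OF sk, of x f] unfolding f_def by auto
  have \<rho>dx: "\<rho> x - x \<in> vec.span {f}" if "x \<in> set xs" for x
  proof -
    have "\<rho> x - x = (- \<omega> x g) *s f" unfolding \<rho>_def using xsf[OF that] by (simp add: vec_eq_iff)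
    then show ?thesis unfolding vec.span_singleton by (metis rangeI)
  qed
  define ws' where "ws' = map \<rho> (xs @ ys)"
  have lws: "length ?ws = Suc (Suc (length xs + length ys))" using rest by simp
  have lws': "length ws' = length xs + length ys" unfolding ws'_def by simp
  have KB1: "vec.span (insert f (set (take k ws'))) = vec.span (set (take (Suc k) ?ws))" if k: "k \<le> length xs" for k
  proof -
    have t1: "set (take (Suc k) ?ws) = insert f (set (take k xs))" using k rest f_def by simp
    have t2: "set (take k ws') = \<rho> ` set (take k xs)" using k unfolding ws'_def by (simp add: take_map)
    have "vec.span ({f} \<union> \<rho> ` set (take k xs)) = vec.span ({f} \<union> set (take k xs))"
      by (rule span_G0) (use \<rho>dx in \<open>auto dest: in_set_takeD\<close>)
    then show ?thesis using t1 t2 by simp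
  qed
  have KB2: "vec.span (insert f (insert g (set (take (length xs + k) ws')))) = vec.span (set (take (Suc (Suc (length xs + k))) ?ws))"
    if k: "k \<le> length ys" for k
  proof -
    let ?B = "set xs \<union> set (take k ys)"
    have t1: "set (take (Suc (Suc (length xs + k))) ?ws) = insert wj (insert f ?B)" using k rest f_def by auto
    have t2: "set (take (length xs + k) ws') = \<rho> ` ?B" unfolding ws'_def by (simp add: take_map image_Un)
    have "vec.span ({f, g} \<union> \<rho> ` ?B) = vec.span ({f, g} \<union> ?B)"
      by (rule span_G0) (use \<rho>d in auto)
    also have "\<dots> = vec.span (insert g (insert f ?B))" by (simp add: insert_commute)
    also have "\<dots> = vec.span (insert wj (insert f ?B))" unfolding g_def
      by (rule span_insert_scale) (use a0 a_def in simp)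
    finally show ?thesis using t1 t2 by simp
  qed
  define U' where "U' = {x\<in>U. \<omega> x f = 0 \<and> \<omega> x g = 0}"
  have U'U: "U' \<subseteq> U" unfolding U'_def by auto
  have subU': "vec.subspace U'"
    unfolding vec.subspace_def U'_def using U
    by (auto simp: om vec.subspace_0 vec.subspace_add vec.subspace_scale)
  have uf_eq: "uf = f - cf *s z" and ug_eq: "ug = g - cg *s z" using f_eq' g_eq by simp_all
  have ndU': "nondeg \<omega> U'" unfolding nondeg_def
  proof (intro ballI impI)
    fix u assume u: "u \<in> U'" and h: "\<forall>w\<in>U'. \<omega> u w = 0"
    have uuf: "\<omega> u uf = 0" and uug: "\<omega> u ug = 0"
      using u unfolding U'_def uf_eq ug_eq using zr by (auto simp: om)
    have "\<omega> u w = 0" if w: "w \<in> U" for w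
    proof -
      define r where "r = w - \<omega> w g *s uf + \<omega> w f *s ug"
      have "\<omega> uf f = 0" "\<omega> ug f = -1" "\<omega> uf g = 1" "\<omega> ug g = 0"
        unfolding uf_eq ug_eq by (simp_all add: om fg gf ff gg zk)
      then have "r \<in> U'" unfolding U'_def r_def using w ufU' ugU U
        by (simp add: om vec.subspace_add vec.subspace_diff vec.subspace_scale)
      then have "\<omega> u r = 0" using h by blast
      moreover have "w = r + \<omega> w g *s uf - \<omega> w f *s ug" unfolding r_def by simp
      ultimately show ?thesis using uuf uug by (metis om(2) om(4) om(6) add.right_neutral diff_zero mult_zero_right)
    qed
    then show "u = 0" using nd u U'U unfolding nondeg_def by blast
  qed
  have toU': "v \<in> vec.span (insert z U')" if v: "v \<in> vec.span (insert z U)" "\<omega> v f = 0" "\<omega> v g = 0" for v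
  proof -
    obtain c where c: "v - c *s z \<in> U" using v spanU by (auto simp: vec.span_breakdown_eq)
    have "v - c *s z \<in> U'" unfolding U'_def using c v zk by (simp add: om)
    then have "v - c *s z \<in> vec.span U'" by (rule vec.span_base)
    then show ?thesis by (auto simp: vec.span_breakdown_eq)
  qed
  have fS: "f \<in> vec.span (insert z U)" using sws f_def by auto
  have gS: "g \<in> vec.span (insert z U)" using sws rest g_def by (auto intro: vec.span_scale)
  have sws': "set ws' \<subseteq> vec.span (insert z U')"
  proof
    fix v assume "v \<in> set ws'"
    then obtain x where x: "x \<in> set (xs @ ys)" "v = \<rho> x" unfolding ws'_def by auto
    have "x \<in> vec.span (insert z U)" using x sws rest by auto
    then have "\<rho> x \<in> vec.span (insert z U)" unfolding \<rho>_def using fS gS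
      by (simp add: vec.span_add vec.span_diff vec.span_scale)
    then show "v \<in> vec.span (insert z U')" using x toU' \<rho>f \<rho>g by simp
  qed
  have ws'fg: "\<forall>x\<in>set ws'. \<omega> x f = 0 \<and> \<omega> x g = 0" unfolding ws'_def using \<rho>f \<rho>g by auto
  have Uws': "U' \<subseteq> vec.span (set ws')"
  proof
    fix u assume u: "u \<in> U'"
    have "vec.span (set ?ws) = vec.span (insert f (insert g (set ws')))"
      using KB2[of "length ys"] lws lws' by simp
    then have "u \<in> vec.span (insert f (insert g (set ws')))" using Uws u U'U by auto
    then obtain \<alpha> where "u - \<alpha> *s f \<in> vec.span (insert g (set ws'))" by (auto simp: vec.span_breakdown_eq)
    then obtain \<beta> where s: "u - \<alpha> *s f - \<beta> *s g \<in> vec.span (set ws')" by (auto simp: vec.span_breakdown_eq)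
    define s where "s = u - \<alpha> *s f - \<beta> *s g"
    have sf: "\<omega> s f = 0" using om_span_l[OF sk, of "set ws'" f s] ws'fg s s_def by auto
    have sg: "\<omega> s g = 0" using om_span_l[OF sk, of "set ws'" g s] ws'fg s s_def by auto
    have ueq: "u = s + \<alpha> *s f + \<beta> *s g" unfolding s_def by simp
    have "\<omega> u f = 0" "\<omega> u g = 0" using u unfolding U'_def by auto
    then have "- \<beta> = 0" "\<alpha> = 0" unfolding ueq by (simp_all add: om sf sg fg gf ff gg)
    then have "u = s" using ueq by simp
    moreover have "s \<in> vec.span (set ws')" using s unfolding s_def .
    ultimately show "u \<in> vec.span (set ws')" by simp
  qed
  have fr': "fresh ws'"
  proof (rule freshI)
    fix k assume k: "k < length ws'"
    show "vec.span (set (take (Suc k) ws')) \<noteq> vec.span (set (take k ws'))"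
    proof
      assume eq: "vec.span (set (take (Suc k) ws')) = vec.span (set (take k ws'))"
      show False
      proof (cases "Suc k \<le> length xs")
        case True
        have "vec.span (insert f (set (take (Suc k) ws'))) = vec.span (insert f (set (take k ws')))"
          using eq by (rule span_insert_cong)
        then have "vec.span (set (take (Suc (Suc k)) ?ws)) = vec.span (set (take (Suc k) ?ws))"
          using KB1[of "Suc k"] KB1[of k] True by simp
        then show False using fresh_F1[OF fr, of "Suc k"] True lws by simp
      next
        case False
        then obtain k' where k': "k = length xs + k'" by (metis le_add_diff_inverse not_less_eq_eq)
        have k'y: "k' < length ys" using k k' lws' by simp
        have "vec.span (insert f (insert g (set (take (Suc k) ws')))) = vec.span (insert f (insert g (set (take k ws'))))"
          using eq by (intro span_insert_cong)
        then have "vec.span (set (take (Suc (Suc (length xs + Suc k'))) ?ws)) = vec.span (set (take (Suc (Suc (length xs + k'))) ?ws))"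
          using KB2[of "Suc k'"] KB2[of k'] k'y k' by simp
        then show False using fresh_F1[OF fr, of "Suc (Suc (length xs + k'))"] k'y lws by simp
      qed
    qed
  qed
  have "hyps \<omega> U' z ws'" unfolding hyps_def using subU' ndU' zk sws' Uws' fr' by auto
  moreover have "length ws' < length ?ws" using lws lws' by simp
  ultimately have "concl \<omega> U' z ws'" using IH by blast
  then obtain E' vs' \<kappa> where k0: "\<kappa> \<noteq> 0" and E': "E' \<subseteq> U'" "finite E'" "hyp_set \<omega> E'"
    and lvs': "length vs' = length ws'"
    and forms: "\<forall>v\<in>set vs'. v = \<kappa> *s z \<or> (\<exists>x\<in>E'. v = x \<or> v = x + \<kappa> *s z)"
    and spans: "\<forall>i\<le>length ws'. vec.span (set (take i vs')) = vec.span (set (take i ws'))"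
    unfolding concl_def by blast
  obtain e1 e2 v1 vj l m n where pc: "e1 \<in> U" "e2 \<in> U" "\<omega> e1 e2 = 1" "v1 = l *s f" "vj = m *s g + n *s f"
    "l \<noteq> 0" "m \<noteq> 0" "v1 = e1 \<or> v1 = e1 + \<kappa> *s z" "vj = e2 \<or> vj = e2 + \<kappa> *s z"
    using pair_choice[OF sk U ufU' ugU f_eq' g_eq fg zk k0] by blast
  have orth: "\<forall>x\<in>E'. \<omega> e1 x = 0 \<and> \<omega> e2 x = 0"
  proof
    fix x assume "x \<in> E'"
    then have x: "\<omega> x f = 0" "\<omega> x g = 0" using E' unfolding U'_def by auto
    then have xf: "\<omega> f x = 0" "\<omega> g x = 0" using om_skew[OF sk] by (metis neg_equal_0_iff_equal)+
    have "\<omega> v1 x = 0" "\<omega> vj x = 0" using pc(4,5) xf by (simp_all add: om)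
    moreover have "\<omega> e1 x = \<omega> v1 x" "\<omega> e2 x = \<omega> vj x" using pc(8,9) zk by (auto simp: om)
    ultimately show "\<omega> e1 x = 0 \<and> \<omega> e2 x = 0" by simp
  qed
  define E where "E = insert e1 (insert e2 E')"
  have hE: "hyp_set \<omega> E" unfolding E_def by (rule hyp_extend[OF sk E'(3) pc(3) orth])
  define vs where "vs = v1 # take (length xs) vs' @ vj # drop (length xs) vs'"
  show ?thesis unfolding concl_def
  proof (intro exI[of _ E] exI[of _ vs] exI[of _ \<kappa>] conjI)
    show "\<kappa> \<noteq> 0" "hyp_set \<omega> E" by (fact k0, fact hE)
    show "E \<subseteq> U" "finite E" using E' U'U pc(1,2) unfolding E_def by auto
    show "length vs = length ?ws" unfolding vs_def using lvs' lws lws' by simp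
    show "\<forall>v\<in>set vs. v = \<kappa> *s z \<or> (\<exists>x\<in>E. v = x \<or> v = x + \<kappa> *s z)"
    proof
      fix v assume "v \<in> set vs"
      then consider "v = v1" | "v = vj" | "v \<in> set vs'" unfolding vs_def
        by (auto dest: in_set_takeD in_set_dropD)
      then show "v = \<kappa> *s z \<or> (\<exists>x\<in>E. v = x \<or> v = x + \<kappa> *s z)"
      proof cases
        case 1 then show ?thesis using pc(8) unfolding E_def by auto
      next
        case 2 then show ?thesis using pc(9) unfolding E_def by auto
      next
        case 3 then show ?thesis using forms unfolding E_def by blast
      qed
    qed
    show "\<forall>i\<le>length ?ws. vec.span (set (take i vs)) = vec.span (set (take i ?ws))"
    proof (intro allI impI)
      fix i assume i: "i \<le> length ?ws"
      consider "i = 0" | k where "i = Suc k" "k \<le> length xs" | k where "i = Suc (Suc (length xs + k))" "k \<le> length ys"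
        using i lws by (metis Nat.add_diff_assoc2 add_Suc_right add_diff_cancel_left' le_add1 not0_implies_Suc not_less_eq_eq le_add_diff_inverse add_le_cancel_left plus_1_eq_Suc)
      then show "vec.span (set (take i vs)) = vec.span (set (take i ?ws))"
      proof cases
        case 1 then show ?thesis by simp
      next
        case (2 k)
        have "set (take i vs) = insert v1 (set (take k vs'))" using 2 lvs' lws' unfolding vs_def by (simp add: min_def)
        then have "vec.span (set (take i vs)) = vec.span (insert f (set (take k vs')))"
          using pc(4) span_insert_scale[OF pc(6)] by simp
        also have "\<dots> = vec.span (insert f (set (take k ws')))"
          by (rule span_insert_cong) (use spans 2 lws' in simp)
        also have "\<dots> = vec.span (set (take i ?ws))" using KB1[OF 2(2)] 2(1) by simp
        finally show ?thesis .
      next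
        case (3 k)
        have "set (take (length xs) vs') \<union> set (take k (drop (length xs) vs')) = set (take (length xs + k) vs')"
          by (simp add: take_add)
        then have "set (take i vs) = insert v1 (insert vj (set (take (length xs + k) vs')))"
          using 3 lvs' lws' unfolding vs_def by auto
        then have "vec.span (set (take i vs)) = vec.span (insert f (insert g (set (take (length xs + k) vs'))))"
          using pc(4,5) span_S3[OF pc(6,7)] by simp
        also have "\<dots> = vec.span (insert f (insert g (set (take (length xs + k) ws'))))"
          by (intro span_insert_cong) (use spans 3 lws' in simp)
        also have "\<dots> = vec.span (set (take i ?ws))" using KB2[OF 3(2)] 3(1) by simp
        finally show ?thesis .
      qed
    qed
  qed
qed




lemma main_G: assumes sk: "skew_bilinear \<omega>" shows "hyps \<omega> U z ws \<Longrightarrow> concl \<omega> U z ws"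
proof (induction ws arbitrary: U z rule: length_induct)
  case (1 ws)
  have IH: "\<forall>ys. length ys < length ws \<longrightarrow> (\<forall>U z. hyps \<omega> U z ys \<longrightarrow> concl \<omega> U z ys)"
    using 1(1) by blast
  show ?case
  proof (cases ws)
    case Nil then show ?thesis using concl_Nil 1(2) by blast
  next
    case (Cons w1 rest)
    show ?thesis
    proof (cases "w1 \<in> vec.span {z}")
      case True then show ?thesis using caseA[OF sk, of U z w1 rest] 1(2) IH Cons by blast
    next
      case False then show ?thesis using caseB[OF sk, of U z w1 rest] 1(2) IH Cons by blast
    qed
  qed
qed

lemma om_sum_l: assumes sk: "skew_bilinear \<omega>" shows "finite S \<Longrightarrow> \<omega> (sum f S) w = (\<Sum>i\<in>S. \<omega> (f i) w)"
  by (induction S rule: finite_induct) (simp_all add: om_addl[OF sk] om_0l[OF sk])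

lemma kernel_exists:
  fixes \<omega> :: "complex^'m \<Rightarrow> complex^'m \<Rightarrow> complex"
  assumes sk: "skew_bilinear \<omega>" and odd: "odd CARD('m)"
  shows "\<exists>z. z \<noteq> 0 \<and> (\<forall>w. \<omega> z w = 0)"
proof -
  define A :: "complex^'m^'m" where "A = (\<chi> i j. \<omega> (axis i 1) (axis j 1))"
  have Aij: "A$i$j = - \<omega> (axis j 1) (axis i 1)" for i j
    unfolding A_def using om_skew[OF sk, of "axis i 1" "axis j 1"] by simp
  have expand: "\<omega> v w = (\<Sum>i\<in>UNIV. v$i * (\<Sum>j\<in>UNIV. A$i$j * w$j))" for v w
  proof -
    have "\<omega> v w = \<omega> (\<Sum>i\<in>UNIV. v$i *s axis i 1) w" by (simp add: basis_expansion)
    also have "\<dots> = (\<Sum>i\<in>UNIV. v$i * \<omega> (axis i 1) w)" by (simp add: om_sum_l[OF sk] om_scl[OF sk])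
    also have "\<dots> = (\<Sum>i\<in>UNIV. v$i * (\<Sum>j\<in>UNIV. A$i$j * w$j))"
    proof (rule sum.cong[OF refl])
      fix i
      have "\<omega> (axis i 1) w = - \<omega> w (axis i 1)" by (rule om_skew[OF sk])
      also have "\<omega> w (axis i 1) = \<omega> (\<Sum>j\<in>UNIV. w$j *s axis j 1) (axis i 1)" by (simp add: basis_expansion)
      also have "\<dots> = (\<Sum>j\<in>UNIV. w$j * \<omega> (axis j 1) (axis i 1))" by (simp add: om_sum_l[OF sk] om_scl[OF sk])
      finally have "\<omega> (axis i 1) w = (\<Sum>j\<in>UNIV. A$i$j * w$j)"
        using Aij by (simp add: sum_negf[symmetric] mult.commute)
      then show "v$i * \<omega> (axis i 1) w = v$i * (\<Sum>j\<in>UNIV. A$i$j * w$j)" by simp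
    qed
    finally show ?thesis .
  qed
  have trij: "(transpose A)$i$j = ((\<chi> i. (-1) *s A$i)::complex^'m^'m)$i$j" for i j
  proof -
    have "(transpose A)$i$j = \<omega> (axis j 1) (axis i 1)" unfolding A_def transpose_def by simp
    also have "\<dots> = - \<omega> (axis i 1) (axis j 1)" by (rule om_skew[OF sk])
    also have "\<dots> = ((\<chi> i. (-1) *s A$i)::complex^'m^'m)$i$j" unfolding A_def by simp
    finally show ?thesis .
  qed
  have tr: "transpose A = (\<chi> i. (-1) *s A$i)" using trij by (simp add: vec_eq_iff)
  have "det A = det (transpose A)" by simp
  also have "\<dots> = (\<Prod>i\<in>(UNIV::'m set). -1) * det A" unfolding tr det_rows_mul by simp
  also have "\<dots> = - det A" using odd by simp
  finally have "det A = 0" by simp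
  then have "\<not> invertible A" by (simp add: invertible_det_nz)
  then obtain x where x: "A *v x = 0" "x \<noteq> 0"
    unfolding invertible_left_inverse matrix_left_invertible_ker by blast
  have "\<omega> v x = 0" for v
  proof -
    have "(\<Sum>j\<in>UNIV. A$i$j * x$j) = 0" for i using x(1) unfolding matrix_vector_mult_def
      by (simp add: vec_eq_iff)
    then show ?thesis by (simp add: expand)
  qed
  then have "\<omega> x w = 0" for w using om_skew[OF sk, of x w] by simp
  then show ?thesis using x(2) by blast
qed




lemma flag_list:
  assumes fl: "full_flag N F"
  shows "k \<le> N \<Longrightarrow> \<exists>ws. length ws = k \<and> (\<forall>i\<in>{1..k}. F i = vec.span (set (take i ws))) \<and> fresh ws"
proof (induction k)
  case 0 then show ?case by (intro exI[of _ "[]"]) (simp add: fresh_def)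
next
  case (Suc k)
  have sub: "vec.subspace (F i)" "vec.dim (F i) = i" if "i \<in> {1..N}" for i
    using fl that unfolding full_flag_def by auto
  have nest: "F i \<subseteq> F (Suc i)" if "1 \<le> i" "i < N" for i using fl that unfolding full_flag_def by auto
  obtain ws where ws: "length ws = k" "\<forall>i\<in>{1..k}. F i = vec.span (set (take i ws))" "fresh ws"
    using Suc by auto
  let ?S = "vec.span (set ws)"
  have spanF: "?S = F k" if "k \<ge> 1" using ws(1,2) that by auto
  have dimS: "vec.dim (set ws) = k"
  proof (cases "k = 0")
    case True then show ?thesis using ws(1) by simp
  next
    case False
    then have "vec.dim ?S = k" using spanF sub[of k] Suc(2) by simp
    then show ?thesis by simp
  qed
  have SF: "?S \<subseteq> F (Suc k)"
  proof (cases "k = 0")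
    case True then show ?thesis using ws(1) sub[of 1] Suc(2) by (simp add: vec.subspace_0)
  next
    case False then show ?thesis using spanF nest[of k] Suc(2) by simp
  qed
  have "\<not> F (Suc k) \<subseteq> ?S"
  proof
    assume "F (Suc k) \<subseteq> ?S"
    then have "vec.dim (F (Suc k)) \<le> vec.dim ?S" by (rule vec.dim_subset)
    then show False using dimS sub[of "Suc k"] Suc(2) by simp
  qed
  then obtain w where w: "w \<in> F (Suc k)" "w \<notin> ?S" by blast
  define ws2 where "ws2 = ws @ [w]"
  have ins: "insert w (set ws) \<subseteq> F (Suc k)" using w SF vec.span_superset by blast
  have "vec.span (insert w (set ws)) = vec.span (F (Suc k))"
  proof (rule vec.dim_eq_span[OF ins])
    show "vec.dim (F (Suc k)) \<le> vec.dim (insert w (set ws))"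
      using sub[of "Suc k"] Suc(2) w(2) dimS by (simp add: vec.dim_insert)
  qed
  moreover have "vec.span (F (Suc k)) = F (Suc k)" using sub(1)[of "Suc k"] Suc(2) vec.span_eq_iff by auto
  ultimately have FS: "F (Suc k) = vec.span (insert w (set ws))" by simp
  show ?case
  proof (intro exI[of _ ws2] conjI)
    show "length ws2 = Suc k" using ws(1) ws2_def by simp
    show "\<forall>i\<in>{1..Suc k}. F i = vec.span (set (take i ws2))"
    proof
      fix i assume i: "i \<in> {1..Suc k}"
      show "F i = vec.span (set (take i ws2))"
      proof (cases "i = Suc k")
        case True then show ?thesis using FS ws(1) ws2_def by simp
      next
        case False then show ?thesis using i ws ws2_def by simp
      qed
    qed
    show "fresh ws2" unfolding fresh_def
    proof (intro allI impI)
      fix j assume j: "j < length ws2"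
      show "ws2 ! j \<notin> vec.span (set (take j ws2))"
      proof (cases "j = k")
        case True then show ?thesis using w ws(1) ws2_def by (simp add: nth_append)
      next
        case False
        then have "j < length ws" using j ws(1) ws2_def by simp
        then show ?thesis using ws(3) unfolding fresh_def ws2_def by (simp add: nth_append)
      qed
    qed
  qed
qed

lemma image_take: "i \<le> length vs \<Longrightarrow> (\<lambda>i. vs!(i-1)) ` {1..i} = set (take i vs)"
proof -
  assume i: "i \<le> length vs"
  have "set (take i vs) = (\<lambda>j. vs!j) ` {0..<i}"
    using i apply (auto simp: set_conv_nth nth_take image_iff)
    by (metis nth_take)
  also have "\<dots> = (\<lambda>i. vs!(i-1)) ` {1..i}"
  proof -
    have "{0..<i} = (\<lambda>i. i - 1) ` {1..i}"
      by (auto simp: image_iff intro!: bexI[of _ "Suc _"])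
    then show ?thesis by (simp add: image_image)
  qed
  finally show ?thesis by simp
qed

theorem lemma3:
  fixes n :: nat
    and U :: "(complex^'m) set"
    and F :: "nat \<Rightarrow> (complex^'m) set"
    and \<omega> :: "complex^'m \<Rightarrow> complex^'m \<Rightarrow> complex"
  assumes "CARD('m) = 2*n + 1"
    and "vec.subspace U" and "vec.dim U = 2*n"
    and "full_flag (2*n+1) F"
    and "skew_bilinear \<omega>"
    and "\<forall>u\<in>U. (\<forall>w\<in>U. \<omega> u w = 0) \<longrightarrow> u = 0"
  shows "\<exists>e :: nat \<Rightarrow> complex^'m.
           is_basis (2*n+1) e \<and>
           (\<forall>k\<in>{1..2*n}. e k \<in> U) \<and>
           vec.span {e (2*n+1)} = {v. \<forall>w. \<omega> v w = 0} \<and>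
           hyperbolic \<omega> (2*n+1) e \<and>
           (\<exists>v :: nat \<Rightarrow> complex^'m.
              (\<forall>i\<in>{1..2*n+1}. v i = e (2*n+1) \<or>
                 (\<exists>k\<in>{1..2*n}. v i = e k \<or> v i = e k + e (2*n+1))) \<and>
              (\<forall>i\<in>{1..2*n+1}. F i = vec.span (v ` {1..i})))"
proof -
  note card = assms(1) and U = assms(2) and dimU = assms(3) and fl = assms(4) and sk = assms(5)
    and nd0 = assms(6)
  note om = om_addl[OF sk] om_addr[OF sk] om_scl[OF sk] om_scr[OF sk] om_diffl[OF sk] om_diffr[OF sk]
    om_self[OF sk] om_0l[OF sk] om_0r[OF sk] om_negl[OF sk] om_negr[OF sk]
  let ?N = "2*n+1"
  have nd: "nondeg \<omega> U" using nd0 unfolding nondeg_def by blast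
  have spanU: "vec.span U = U" using vec.span_eq_iff U by blast
  obtain z0 where z0: "z0 \<noteq> 0" "\<forall>w. \<omega> z0 w = 0" using kernel_exists[OF sk] card by auto
  have z0U: "z0 \<notin> U" using nd0 z0 by blast
  have dimV: "vec.dim (UNIV :: (complex^'m) set) = ?N" using card by (simp add: card_cart_basis)
  have "vec.dim (insert z0 U) = ?N" using z0U dimU by (simp add: vec.dim_insert spanU)
  then have full: "vec.span (insert z0 U) = UNIV"
    using vec.dim_eq_full[of "insert z0 U"] by (simp add: vec.dimension_def card_cart_basis card)
  obtain ws where ws: "length ws = ?N" "\<forall>i\<in>{1..?N}. F i = vec.span (set (take i ws))" "fresh ws"
    using flag_list[OF fl, of ?N] by auto
  have FN: "F ?N = UNIV" using fl unfolding full_flag_def by simp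
  have spws: "vec.span (set ws) = UNIV" using ws(1) ws(2)[rule_format, of ?N] FN by simp
  have "hyps \<omega> U z0 ws" unfolding hyps_def using U nd z0 full spws ws(3) by auto
  then have "concl \<omega> U z0 ws" by (rule main_G[OF sk])
  then obtain E vs \<kappa> where k0: "\<kappa> \<noteq> 0" and E: "E \<subseteq> U" "finite E" "hyp_set \<omega> E"
    and lvs: "length vs = length ws"
    and forms: "\<forall>v\<in>set vs. v = \<kappa> *s z0 \<or> (\<exists>x\<in>E. v = x \<or> v = x + \<kappa> *s z0)"
    and spans: "\<forall>i\<le>length ws. vec.span (set (take i vs)) = vec.span (set (take i ws))"
    unfolding concl_def by blast
  define z where "z = \<kappa> *s z0"
  have zk: "\<omega> z w = 0" for w unfolding z_def using z0 by (simp add: om)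
  have zr: "\<omega> w z = 0" for w using zk om_skew[OF sk, of w z] by simp
  have zU: "z \<notin> U"
  proof
    assume "z \<in> U"
    then have "(1/\<kappa>) *s z \<in> U" using U by (simp add: vec.subspace_scale)
    then show False using z0U k0 unfolding z_def by (simp add: vector_smult_assoc)
  qed
  have zE: "z \<notin> E" using zU E by auto
  have ker: "vec.span {z} = {v. \<forall>w. \<omega> v w = 0}"
  proof
    show "vec.span {z} \<subseteq> {v. \<forall>w. \<omega> v w = 0}" by (auto simp: vec.span_singleton om zk)
    show "{v. \<forall>w. \<omega> v w = 0} \<subseteq> vec.span {z}"
    proof
      fix v assume v: "v \<in> {v. \<forall>w. \<omega> v w = 0}"
      have "v \<in> vec.span (insert z0 U)" using full by simp
      then obtain c where c: "v - c *s z0 \<in> U" using spanU by (auto simp: vec.span_breakdown_eq)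
      have "\<forall>w\<in>U. \<omega> (v - c *s z0) w = 0" using v z0 by (simp add: om)
      then have "v - c *s z0 = 0" using nd0 c by blast
      then have "v = (c/\<kappa>) *s z" unfolding z_def using k0 by (simp add: vector_smult_assoc)
      then show "v \<in> vec.span {z}" unfolding vec.span_singleton by (metis rangeI)
    qed
  qed
  let ?T = "insert z E"
  have "set vs \<subseteq> vec.span ?T"
  proof
    fix v assume "v \<in> set vs"
    then have "v = z \<or> (\<exists>x\<in>E. v = x \<or> v = x + z)" using forms z_def by auto
    then show "v \<in> vec.span ?T" by (auto intro: vec.span_base vec.span_add)
  qed
  then have "vec.span (set vs) \<subseteq> vec.span ?T" using vec.span_minimal by blast
  moreover have "vec.span (set vs) = UNIV" using spans lvs spws by (metis order_refl take_all)
  ultimately have spT: "vec.span ?T = UNIV" by auto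
  have indT: "vec.independent ?T"
    unfolding vec.dependent_def
  proof
    assume "\<exists>a\<in>?T. a \<in> vec.span (?T - {a})"
    then obtain a where a: "a \<in> ?T" "a \<in> vec.span (?T - {a})" by blast
    show False
    proof (cases "a = z")
      case True
      then have "?T - {a} = E" using zE by auto
      then have "z \<in> vec.span E" using a True by simp
      moreover have "vec.span E \<subseteq> U" using E U by (simp add: vec.span_minimal)
      ultimately show False using zU by auto
    next
      case False
      then have aE: "a \<in> E" using a by simp
      then obtain p where p: "p \<in> E" "\<omega> a p \<noteq> 0" using E(3) unfolding hyp_set_def by blast
      have pa: "\<omega> p a \<noteq> 0" using p om_skew[OF sk, of p a] by simp
      have "\<forall>t\<in>?T - {a}. \<omega> t p = 0"
      proof
        fix t assume t: "t \<in> ?T - {a}"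
        show "\<omega> t p = 0"
        proof (cases "t = z")
          case True then show ?thesis using zk by simp
        next
          case False
          then have tE: "t \<in> E" "t \<noteq> a" using t by auto
          show ?thesis
          proof (rule ccontr)
            assume "\<omega> t p \<noteq> 0"
            then have "\<omega> p t \<noteq> 0" using om_skew[OF sk, of p t] by simp
            then have "t = a" using E(3) p(1) pa tE(1) aE unfolding hyp_set_def by blast
            then show False using tE by simp
          qed
        qed
      qed
      then have "\<omega> a p = 0" using om_span_l[OF sk] a(2) by blast
      then show False using p by simp
    qed
  qed
  have "card ?T = ?N" using vec.dim_span_eq_card_independent[OF indT] spT dimV by simp
  then have cE: "card E = 2*n" using E(2) zE by simp
  obtain h where h: "bij_betw h {1..2*n} E" using ex_bij_betw_nat_finite_1[OF E(2)] cE by auto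
  have hE: "h k \<in> E" if "k \<in> {1..2*n}" for k using h that by (auto simp: bij_betw_def)
  have hinj: "inj_on h {1..2*n}" using h by (simp add: bij_betw_def)
  have hsurj: "\<exists>k\<in>{1..2*n}. x = h k" if "x \<in> E" for x using h that by (auto simp: bij_betw_def)
  define e where "e k = (if k = ?N then z else h k)" for k
  have eN: "e ?N = z" unfolding e_def by simp
  have eh: "e k = h k" if "k \<in> {1..2*n}" for k using that unfolding e_def by auto
  have rng: "{1..?N} = insert ?N {1..2*n}" by auto
  have eimg: "e ` {1..?N} = ?T"
  proof -
    have "e ` {1..2*n} = h ` {1..2*n}" using eh by (auto simp: image_iff)
    then show ?thesis unfolding rng using eN h by (simp add: bij_betw_def)
  qed
  have eimg2: "e ` {1..2*n} = E"
  proof -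
    have "e ` {1..2*n} = h ` {1..2*n}" by (rule image_cong[OF refl]) (rule eh)
    then show ?thesis using h by (simp add: bij_betw_def)
  qed
  have einj: "inj_on e {1..?N}"
  proof -
    have "inj_on e {1..2*n} = inj_on h {1..2*n}" by (rule inj_on_cong) (rule eh)
    then have "inj_on e {1..2*n}" using hinj by simp
    moreover have "e ?N \<notin> e ` {1..2*n}" using eimg2 eN zE by simp
    ultimately show ?thesis unfolding rng by simp
  qed
  show ?thesis
  proof (rule exI[of _ e], intro conjI)
    show "is_basis ?N e" unfolding is_basis_def using einj eimg indT spT by simp
    show "\<forall>k\<in>{1..2*n}. e k \<in> U" using eh hE E(1) by auto
    show "vec.span {e ?N} = {v. \<forall>w. \<omega> v w = 0}" using eN ker by simp
    show "hyperbolic \<omega> ?N e" unfolding hyperbolic_def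
    proof
      fix i assume i: "i \<in> {1..?N}"
      show "(\<forall>v. \<omega> (e i) v = 0) \<or> ((\<exists>!j. j \<in> {1..?N} \<and> \<omega> (e i) (e j) \<noteq> 0) \<and>
         (\<forall>j\<in>{1..?N}. \<omega> (e i) (e j) \<noteq> 0 \<longrightarrow> \<omega> (e i) (e j) = 1 \<or> \<omega> (e i) (e j) = -1))"
      proof (cases "i = ?N")
        case True then show ?thesis using eN zk by simp
      next
        case False
        then have i': "i \<in> {1..2*n}" using i by auto
        let ?x = "h i"
        have xE: "?x \<in> E" using hE i' by simp
        have ei: "e i = ?x" using eh i' by simp
        have ej: "j \<in> {1..2*n}" "e j = h j" if "j \<in> {1..?N}" "\<omega> (e i) (e j) \<noteq> 0" for j
        proof -
          have "j \<noteq> ?N" using that eN zr by auto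
          then show "j \<in> {1..2*n}" using that by auto
          then show "e j = h j" using eh by simp
        qed
        obtain y where y: "y \<in> E" "\<omega> ?x y \<noteq> 0" "\<And>y'. y' \<in> E \<Longrightarrow> \<omega> ?x y' \<noteq> 0 \<Longrightarrow> y' = y"
          using E(3) xE unfolding hyp_set_def by blast
        obtain j0 where j0: "j0 \<in> {1..2*n}" "y = h j0" using hsurj y(1) by blast
        have ex1: "\<exists>!j. j \<in> {1..?N} \<and> \<omega> (e i) (e j) \<noteq> 0"
        proof (rule ex1I[of _ j0])
          have "e j0 = y" using eh[OF j0(1)] j0(2) by simp
          then show "j0 \<in> {1..?N} \<and> \<omega> (e i) (e j0) \<noteq> 0" using j0(1) y(2) ei by simp
          fix j assume j: "j \<in> {1..?N} \<and> \<omega> (e i) (e j) \<noteq> 0"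
          have jj: "j \<in> {1..2*n}" "e j = h j" using ej[of j] j by blast+
          have "\<omega> ?x (h j) \<noteq> 0" using j jj(2) ei by simp
          then have "h j = y" using y(3)[OF hE[OF jj(1)]] by blast
          then have "h j = h j0" using j0(2) by simp
          then show "j = j0" using inj_onD[OF hinj _ jj(1) j0(1)] by blast
        qed
        have pm: "\<forall>j\<in>{1..?N}. \<omega> (e i) (e j) \<noteq> 0 \<longrightarrow> \<omega> (e i) (e j) = 1 \<or> \<omega> (e i) (e j) = -1"
        proof (intro ballI impI)
          fix j assume "j \<in> {1..?N}" "\<omega> (e i) (e j) \<noteq> 0"
          then have "e j \<in> E" using ej[of j] hE by metis
          moreover have "\<forall>y\<in>E. \<omega> ?x y \<noteq> 0 \<longrightarrow> \<omega> ?x y = 1 \<or> \<omega> ?x y = -1"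
            using E(3) xE unfolding hyp_set_def by blast
          ultimately show "\<omega> (e i) (e j) = 1 \<or> \<omega> (e i) (e j) = -1"
            using ei \<open>\<omega> (e i) (e j) \<noteq> 0\<close> by simp
        qed
        show ?thesis using ex1 pm by blast
      qed
    qed
    define v where "v i = vs ! (i - 1)" for i
    have forms2: "\<forall>i\<in>{1..?N}. v i = e ?N \<or> (\<exists>k\<in>{1..2*n}. v i = e k \<or> v i = e k + e ?N)"
    proof (intro ballI)
      fix i assume i: "i \<in> {1..?N}"
      have "v i \<in> set vs" unfolding v_def using i lvs ws(1) by auto
      then have "v i = z \<or> (\<exists>x\<in>E. v i = x \<or> v i = x + z)" using forms z_def by auto
      then show "v i = e ?N \<or> (\<exists>k\<in>{1..2*n}. v i = e k \<or> v i = e k + e ?N)"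
      proof
        assume "v i = z" then show ?thesis using eN by simp
      next
        assume "\<exists>x\<in>E. v i = x \<or> v i = x + z"
        then obtain x where x: "x \<in> E" "v i = x \<or> v i = x + z" by blast
        obtain k where k: "k \<in> {1..2*n}" "x = h k" using hsurj[OF x(1)] by blast
        have "e k = x" using eh[OF k(1)] k(2) by simp
        then show ?thesis using x(2) k(1) eN by blast
      qed
    qed
    have flag2: "\<forall>i\<in>{1..?N}. F i = vec.span (v ` {1..i})"
    proof (intro ballI)
      fix i assume i: "i \<in> {1..?N}"
      have "v ` {1..i} = set (take i vs)" unfolding v_def by (rule image_take) (use i lvs ws(1) in simp)
      then show "F i = vec.span (v ` {1..i})" using ws(2) spans i ws(1) by simp
    qed
    show "\<exists>v. (\<forall>i\<in>{1..?N}. v i = e ?N \<or> (\<exists>k\<in>{1..2*n}. v i = e k \<or> v i = e k + e ?N)) \<and>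
              (\<forall>i\<in>{1..?N}. F i = vec.span (v ` {1..i}))"
      using forms2 flag2 by blast
  qed
qed


end
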